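(* Let $n\ge2$, $\lambda>0$, and let $\mathbf{r}\in\mathbb{R}^n$ have pairwise distinct coordinates, with $r_{(n)}=\max_ir_i$, $r_{(1)}=\min_ir_i$ attained at indices $i^\star$ and $j^\star$ respectively. Then $$\sup_{(\boldsymbol{\pi},\mathbf{q})\in\Delta_n\times\Delta_n}\Big\{\langle\mathbf{q}-\boldsymbol{\pi},\mathbf{r}\rangle-\lambda H(\mathbf{q}\|\boldsymbol{\pi})\Big\}=\lambda\log\Big(\frac{e^{r_{(n)}/\lambda}-e^{r_{(1)}/\lambda}}{r_{(n)}-r_{(1)}}\Big)-\frac{e^{r_{(n)}/\lambda}r_{(1)}-e^{r_{(1)}/\lambda}r_{(n)}}{e^{r_{(n)}/\lambda}-e^{r_{(1)}/\lambda}}+\lambda\log\lambda-\lambda,$$ and the supremum is attained at $(\boldsymbol{\pi}^\star,\mathbf{q}^\star)$ where $$\pi^\star_{i^\star}=\frac{e^{r_{i^\star}/\lambda}-e^{r_{j^\star}/\lambda}-\lambda^{-1}(r_{i^\star}-r_{j^\star})e^{r_{j^\star}/\lambda}}{\lambda^{-1}(r_{i^\star}-r_{j^\star})(e^{r_{i^\star}/\lambda}-e^{r_{j^\star}/\lambda})},\quad\pi^\star_{j^\star}=1-\pi^\star_{i^\star},\quad\pi^\star_k=0\ (k\notin\{i^\star,j^\star\}),$$ and $q^\star_i=\pi^\star_ie^{r_i/\lambda}/\sum_j\pi^\star_je^{r_j/\lambda}$ for $i=1,\dots,n$.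
   Context: $\Delta_n=\{\mathbf{x}\in[0,1]^n:\sum_ix_i=1\}$; $\supp(\mathbf{x})=\{i:x_i>0\}$. Relative entropy: $H(\mathbf{q}\|\boldsymbol{\pi})=\sum_{i\in\supp(\mathbf{q})}q_i\log(q_i/\pi_i)$ if $\supp(\mathbf{q})\subseteq\supp(\boldsymbol{\pi})$ and $+\infty$ otherwise. *)

theory Defs
  imports "HOL-Analysis.Analysis" "HOL-Library.Extended_Real"
begin

text \<open>Vectors in R^n are functions on a finite index type 'n (n = CARD('n)).\<close>

definition prob_simplex :: "('n::finite \<Rightarrow> real) set" where
  "prob_simplex = {x. (\<forall>i. 0 \<le> x i \<and> x i \<le> 1) \<and> (\<Sum>i\<in>UNIV. x i) = 1}"

definition supp_vec :: "('n::finite \<Rightarrow> real) \<Rightarrow> 'n set" where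
  "supp_vec x = {i. x i > 0}"

definition rel_entropy :: "('n::finite \<Rightarrow> real) \<Rightarrow> ('n \<Rightarrow> real) \<Rightarrow> ereal" where
  "rel_entropy q p =
     (if supp_vec q \<subseteq> supp_vec p then ereal (\<Sum>i\<in>supp_vec q. q i * ln (q i / p i)) else \<infinity>)"

definition objective :: "real \<Rightarrow> ('n::finite \<Rightarrow> real) \<Rightarrow> ('n \<Rightarrow> real) \<Rightarrow> ('n \<Rightarrow> real) \<Rightarrow> ereal" where
  "objective lam r p q = ereal (\<Sum>i\<in>UNIV. (q i - p i) * r i) - ereal lam * rel_entropy q p"

end

theory Submission
  imports Defs
begin

lemma gibbs_term:
  fixes q p r lam Z :: real
  assumes q: "q>0" and p: "p>0" and lam: "lam>0" and Z: "Z>0"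
  shows "q*r - lam*(q*ln(q/p)) \<le> lam*(p*exp(r/lam)/Z - q + q*ln Z)"
proof -
  have pos: "p*exp(r/lam)/(q*Z) > 0" using assms by simp
  have x: "ln (p*exp(r/lam)/(q*Z)) \<le> p*exp(r/lam)/(q*Z) - 1" by (rule ln_le_minus_one[OF pos])
  have "ln (p*exp(r/lam)/(q*Z)) = ln p + r/lam - ln q - ln Z" using assms by (simp add: ln_div ln_mult)
  then have a: "r/lam \<le> ln q + ln Z - ln p + p*exp(r/lam)/(q*Z) - 1" using x by linarith
  have "lam*q*(r/lam) \<le> lam*q*(ln q + ln Z - ln p + p*exp(r/lam)/(q*Z) - 1)"
    using a assms by (intro mult_left_mono) auto
  moreover have "lam*q*(r/lam) = q*r" using lam by simp
  moreover have "lam*q*(ln q + ln Z - ln p + p*exp(r/lam)/(q*Z) - 1) = lam*(q*(ln q - ln p)) + lam*(p*exp(r/lam)/Z - q + q*ln Z)"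
    using assms by (simp add: field_simps)
  moreover have "ln (q/p) = ln q - ln p" using assms by (simp add: ln_div)
  ultimately show ?thesis by simp
qed

lemma exp_chord:
  fixes x m M lam :: real
  assumes "m \<le> x" "x \<le> M" "m < M" "lam > 0"
  shows "exp (x/lam) \<le> ((M-x)*exp(m/lam) + (x-m)*exp(M/lam))/(M-m)"
proof -
  define t where "t = (x-m)/(M-m)"
  have t: "0 \<le> t" "t \<le> 1" using assms by (auto simp: t_def field_simps)
  have "exp ((1-t) *\<^sub>R (m/lam) + t *\<^sub>R (M/lam)) \<le> (1-t)*exp(m/lam) + t*exp(M/lam)"
    using convex_onD[OF exp_convex, of t "m/lam" "M/lam"] t by simp
  moreover have "(1-t) *\<^sub>R (m/lam) + t *\<^sub>R (M/lam) = x/lam"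
  proof -
    have "t*(M-m) = x-m" using assms by (simp add: t_def)
    then have "(1-t)*m + t*M = x" by (simp add: algebra_simps)
    then show ?thesis by (simp add: add_divide_distrib[symmetric] algebra_simps)
  qed
  moreover have "(1-t)*exp(m/lam) + t*exp(M/lam) = ((M-x)*exp(m/lam) + (x-m)*exp(M/lam))/(M-m)"
  proof -
    have "M-m \<noteq> 0" using assms by simp
    then have "1-t = (M-x)/(M-m)" by (simp add: t_def field_simps)
    then show ?thesis by (simp add: t_def add_divide_distrib)
  qed
  ultimately show ?thesis by simp
qed

lemma h_bound:
  fixes x m M lam :: real
  assumes "m \<le> x" "x \<le> M" "m < M" "lam > 0"
  shows "(M-m)*exp(x/lam)/(exp(M/lam)-exp(m/lam)) - x \<le> (M-m)*exp(m/lam)/(exp(M/lam)-exp(m/lam)) - m"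
proof -
  have D: "exp(M/lam)-exp(m/lam) > 0" using assms by (simp add: divide_strict_right_mono)
  have "(M-m)*exp(x/lam) \<le> (M-x)*exp(m/lam) + (x-m)*exp(M/lam)"
  proof -
    have "M-m>0" using assms by simp
    then show ?thesis using exp_chord[OF assms] by (simp add: le_divide_eq mult.commute)
  qed
  then have "(M-m)*exp(x/lam)/(exp(M/lam)-exp(m/lam)) \<le> ((M-x)*exp(m/lam) + (x-m)*exp(M/lam))/(exp(M/lam)-exp(m/lam))"
    using D by (simp add: divide_right_mono)
  also have "\<dots> = (M-m)*exp(m/lam)/(exp(M/lam)-exp(m/lam)) - m + x"
  proof -
    have "exp(M/lam)-exp(m/lam) \<noteq> 0" "lam \<noteq> 0" "M \<noteq> m" using D assms by auto
    then show ?thesis by (simp add: field_simps)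
  qed
  finally show ?thesis by simp
qed

definition Vval :: "real \<Rightarrow> real \<Rightarrow> real \<Rightarrow> real" where
  "Vval lam m M = lam * ln ((exp (M / lam) - exp (m / lam)) / (M - m))
                  - (exp (M / lam) * m - exp (m / lam) * M) / (exp (M / lam) - exp (m / lam))
                  + lam * ln lam - lam"

lemma simplex_nonneg: "p \<in> prob_simplex \<Longrightarrow> 0 \<le> p i"
  by (simp add: prob_simplex_def)
lemma simplex_sum: "p \<in> prob_simplex \<Longrightarrow> (\<Sum>i\<in>UNIV. p i) = 1"
  by (simp add: prob_simplex_def)

lemma sum_supp:
  fixes q :: "'n::finite \<Rightarrow> real" 
  assumes "\<And>i. 0 \<le> q i"
  shows "(\<Sum>i\<in>UNIV. q i * f i) = (\<Sum>i\<in>supp_vec q. q i * f i)"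
proof (rule sum.mono_neutral_right)
  show "\<forall>i\<in>UNIV - supp_vec q. q i * f i = 0"
    using assms by (auto simp: supp_vec_def) (metis antisym_conv1)
qed auto

lemma Z_pos:
  fixes p :: "'n::finite \<Rightarrow> real"
  assumes "p \<in> prob_simplex"
  shows "(\<Sum>i\<in>UNIV. p i * exp (r i / lam)) > 0"
proof -
  have "\<exists>i. p i > 0"
  proof (rule ccontr)
    assume "\<not> ?thesis"
    then have "\<forall>i. p i = 0" using simplex_nonneg[OF assms] by (metis not_less order_antisym)
    then show False using simplex_sum[OF assms] by simp
  qed
  then obtain i where "p i > 0" by blast
  then show ?thesis
    by (intro sum_pos2[where i=i]) (auto intro: mult_nonneg_nonneg simplex_nonneg[OF assms])
qed

lemma stepA:
  fixes p q r :: "'n::finite \<Rightarrow> real"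
  assumes p: "p \<in> prob_simplex" and q: "q \<in> prob_simplex" and sub: "supp_vec q \<subseteq> supp_vec p"
    and lam: "lam > 0"
  shows "(\<Sum>i\<in>UNIV. q i * r i) - lam * (\<Sum>i\<in>supp_vec q. q i * ln (q i / p i))
          \<le> lam * ln (\<Sum>i\<in>UNIV. p i * exp (r i / lam))"
proof -
  define Z where "Z = (\<Sum>i\<in>UNIV. p i * exp (r i / lam))"
  have Z: "Z > 0" unfolding Z_def by (rule Z_pos[OF p])
  have q0: "\<And>i. 0 \<le> q i" using simplex_nonneg[OF q] .
  have p0: "\<And>i. 0 \<le> p i" using simplex_nonneg[OF p] .
  have e1: "(\<Sum>i\<in>UNIV. q i * r i) = (\<Sum>i\<in>supp_vec q. q i * r i)" by (rule sum_supp[OF q0])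
  have e2: "(\<Sum>i\<in>supp_vec q. q i) = 1"
  proof -
    have "(\<Sum>i\<in>UNIV. q i * 1) = (\<Sum>i\<in>supp_vec q. q i * 1)" by (rule sum_supp[OF q0])
    then show ?thesis using simplex_sum[OF q] by simp
  qed
  have "(\<Sum>i\<in>supp_vec q. q i * r i) - lam * (\<Sum>i\<in>supp_vec q. q i * ln (q i / p i))
        = (\<Sum>i\<in>supp_vec q. q i * r i - lam * (q i * ln (q i / p i)))"
    by (simp add: sum_subtractf sum_distrib_left)
  also have "\<dots> \<le> (\<Sum>i\<in>supp_vec q. lam*(p i*exp(r i/lam)/Z - q i + q i*ln Z))"
  proof (rule sum_mono)
    fix i assume i: "i \<in> supp_vec q"
    then have "q i > 0" "p i > 0" using sub by (auto simp: supp_vec_def)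
    then show "q i * r i - lam * (q i * ln (q i / p i)) \<le> lam*(p i*exp(r i/lam)/Z - q i + q i*ln Z)"
      using gibbs_term lam Z by blast
  qed
  also have "\<dots> = lam * ((\<Sum>i\<in>supp_vec q. p i*exp(r i/lam))/Z - 1 + ln Z)"
    using e2 by (simp add: sum_distrib_left[symmetric] sum.distrib sum_subtractf sum_divide_distrib[symmetric]
        sum_distrib_right[symmetric])
  also have "\<dots> \<le> lam * (Z/Z - 1 + ln Z)"
  proof -
    have "(\<Sum>i\<in>supp_vec q. p i*exp(r i/lam)) \<le> Z"
      unfolding Z_def by (rule sum_mono2) (auto intro: mult_nonneg_nonneg p0)
    then show ?thesis using Z lam by (simp add: divide_right_mono)
  qed
  also have "\<dots> = lam * ln Z" using Z by simp
  finally show ?thesis unfolding e1 Z_def .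
qed

lemma stepB:
  fixes p r :: "'n::finite \<Rightarrow> real"
  assumes p: "p \<in> prob_simplex" and lam: "lam > 0" and mM: "m < M"
    and bnd: "\<And>i. m \<le> r i \<and> r i \<le> M"
  shows "lam * ln (\<Sum>i\<in>UNIV. p i * exp (r i / lam)) - (\<Sum>i\<in>UNIV. p i * r i) \<le> Vval lam m M"
proof -
  define E1 where "E1 = exp (M/lam)"
  define E0 where "E0 = exp (m/lam)"
  define Z where "Z = (\<Sum>i\<in>UNIV. p i * exp (r i / lam))"
  have Z: "Z > 0" unfolding Z_def by (rule Z_pos[OF p])
  have D: "E1 - E0 > 0" using mM lam by (simp add: E1_def E0_def divide_strict_right_mono)
  define S where "S = lam * (E1 - E0) / (M - m)"
  have S: "S > 0" using D lam mM by (simp add: S_def)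
  have p0: "\<And>i. 0 \<le> p i" using simplex_nonneg[OF p] .
  have lnZ: "ln Z \<le> ln S + Z/S - 1"
  proof -
    have "ln (Z/S) \<le> Z/S - 1" using Z S by (intro ln_le_minus_one) simp
    moreover have "ln (Z/S) = ln Z - ln S" using Z S by (simp add: ln_div)
    ultimately show ?thesis by simp
  qed
  define hm where "hm = (M-m)*E0/(E1-E0) - m"
  have "lam * Z / S - (\<Sum>i\<in>UNIV. p i * r i) = (\<Sum>i\<in>UNIV. p i * ((M-m)*exp(r i/lam)/(E1-E0) - r i))"
  proof -
    have "lam * Z / S = (\<Sum>i\<in>UNIV. p i * ((M-m)*exp(r i/lam)/(E1-E0)))"
    proof -
      have "lam * Z / S = Z * ((M-m)/(E1-E0))" using lam mM D by (simp add: S_def field_simps)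
      also have "\<dots> = (\<Sum>i\<in>UNIV. p i * exp (r i / lam) * ((M-m)/(E1-E0)))"
        unfolding Z_def by (rule sum_distrib_right)
      also have "\<dots> = (\<Sum>i\<in>UNIV. p i * ((M-m)*exp(r i/lam)/(E1-E0)))"
        by (rule sum.cong) simp_all
      finally show ?thesis .
    qed
    then show ?thesis by (simp add: sum_subtractf right_diff_distrib)
  qed
  also have "\<dots> \<le> (\<Sum>i\<in>UNIV. p i * hm)"
  proof (rule sum_mono)
    fix i
    have "(M-m)*exp(r i/lam)/(E1-E0) - r i \<le> hm"
      unfolding hm_def E1_def E0_def using h_bound[of m "r i" M lam] bnd[of i] mM lam by simp
    then show "p i * ((M-m)*exp(r i/lam)/(E1-E0) - r i) \<le> p i * hm"
      using p0 by (simp add: mult_left_mono)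
  qed
  also have "\<dots> = hm" using simplex_sum[OF p] by (simp add: sum_distrib_right[symmetric])
  finally have hb: "lam * Z / S - (\<Sum>i\<in>UNIV. p i * r i) \<le> hm" .
  have "lam * ln Z - (\<Sum>i\<in>UNIV. p i * r i) \<le> lam * (ln S + Z/S - 1) - (\<Sum>i\<in>UNIV. p i * r i)"
    using lnZ lam by simp
  also have "\<dots> = lam * ln S - lam + (lam * Z / S - (\<Sum>i\<in>UNIV. p i * r i))"
    by (simp add: algebra_simps)
  also have "\<dots> \<le> lam * ln S - lam + hm" using hb by simp
  also have "\<dots> = Vval lam m M"
  proof -
    have "ln S = ln lam + ln ((E1 - E0)/(M-m))"
      unfolding S_def using lam D mM by (simp add: ln_div ln_mult)
    moreover have "hm = - ((E1 * m - E0 * M) / (E1 - E0))"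
      unfolding hm_def using D by (simp add: field_simps)
    ultimately show ?thesis unfolding Vval_def E1_def[symmetric] E0_def[symmetric]
      by (simp only:) (simp add: algebra_simps)
  qed
  finally show ?thesis unfolding Z_def .
qed

lemma upper_bound:
  fixes p q r :: "'n::finite \<Rightarrow> real"
  assumes p: "p \<in> prob_simplex" and q: "q \<in> prob_simplex" and lam: "lam > 0" and mM: "m < M"
    and bnd: "\<And>i. m \<le> r i \<and> r i \<le> M"
  shows "objective lam r p q \<le> ereal (Vval lam m M)"
proof (cases "supp_vec q \<subseteq> supp_vec p")
  case False
  then show ?thesis using lam by (simp add: objective_def rel_entropy_def)
next
  case True
  have A: "(\<Sum>i\<in>UNIV. q i * r i) - lam * (\<Sum>i\<in>supp_vec q. q i * ln (q i / p i))
          \<le> lam * ln (\<Sum>i\<in>UNIV. p i * exp (r i / lam))" by (rule stepA[OF p q True lam])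
  have B: "lam * ln (\<Sum>i\<in>UNIV. p i * exp (r i / lam)) - (\<Sum>i\<in>UNIV. p i * r i) \<le> Vval lam m M"
    by (rule stepB[OF p lam mM bnd])
  have "(\<Sum>i\<in>UNIV. (q i - p i) * r i) = (\<Sum>i\<in>UNIV. q i * r i) - (\<Sum>i\<in>UNIV. p i * r i)"
    by (simp add: left_diff_distrib sum_subtractf)
  then show ?thesis using A B True by (simp add: objective_def rel_entropy_def)
qed

lemma gibbs_attain:
  fixes p r :: "'n::finite \<Rightarrow> real"
  assumes p: "p \<in> prob_simplex" and lam: "lam > 0"
    and Zd: "Z = (\<Sum>j\<in>UNIV. p j * exp (r j / lam))"
    and qd: "q = (\<lambda>i. p i * exp (r i / lam) / Z)"
  shows "q \<in> prob_simplex \<and> objective lam r p q = ereal (lam * ln Z - (\<Sum>i\<in>UNIV. p i * r i))"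
proof -
  have Z: "Z > 0" unfolding Zd by (rule Z_pos[OF p])
  have p0: "\<And>i. 0 \<le> p i" using simplex_nonneg[OF p] .
  have q0: "\<And>i. 0 \<le> q i" unfolding qd using p0 Z by simp
  have qs: "(\<Sum>i\<in>UNIV. q i) = 1" unfolding qd using Z
    by (simp add: sum_divide_distrib[symmetric] Zd[symmetric])
  have q1: "\<And>i. q i \<le> 1"
  proof -
    fix i
    have "q i \<le> (\<Sum>i\<in>UNIV. q i)" by (rule member_le_sum) (auto simp: q0)
    then show "q i \<le> 1" using qs by simp
  qed
  have qS: "q \<in> prob_simplex" using q0 q1 qs by (simp add: prob_simplex_def)
  have supp: "supp_vec q = supp_vec p" unfolding supp_vec_def qd using Z
    by (auto simp: zero_less_divide_iff zero_less_mult_iff)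
  have "(\<Sum>i\<in>supp_vec q. q i * ln (q i / p i)) = (\<Sum>i\<in>supp_vec q. q i * r i / lam - q i * ln Z)"
  proof (rule sum.cong)
    fix i assume "i \<in> supp_vec q"
    then have pi: "p i > 0" using supp by (metis mem_Collect_eq supp_vec_def)
    have "q i / p i = exp (r i / lam) / Z" unfolding qd using pi by simp
    then have "ln (q i / p i) = r i / lam - ln Z" using Z by (simp add: ln_div)
    then show "q i * ln (q i / p i) = q i * r i / lam - q i * ln Z" by (simp add: right_diff_distrib)
  qed simp
  also have "\<dots> = (\<Sum>i\<in>supp_vec q. q i * r i) / lam - (\<Sum>i\<in>supp_vec q. q i) * ln Z"
    by (simp add: sum_subtractf sum_divide_distrib sum_distrib_right)
  also have "\<dots> = (\<Sum>i\<in>UNIV. q i * r i) / lam - ln Z"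
  proof -
    have "(\<Sum>i\<in>UNIV. q i * 1) = (\<Sum>i\<in>supp_vec q. q i * 1)" by (rule sum_supp[OF q0])
    then have "(\<Sum>i\<in>supp_vec q. q i) = 1" using qs by simp
    moreover have "(\<Sum>i\<in>UNIV. q i * r i) = (\<Sum>i\<in>supp_vec q. q i * r i)" by (rule sum_supp[OF q0])
    ultimately show ?thesis by simp
  qed
  finally have H: "(\<Sum>i\<in>supp_vec q. q i * ln (q i / p i)) = (\<Sum>i\<in>UNIV. q i * r i) / lam - ln Z" .
  have "(\<Sum>i\<in>UNIV. (q i - p i) * r i) = (\<Sum>i\<in>UNIV. q i * r i) - (\<Sum>i\<in>UNIV. p i * r i)"
    by (simp add: left_diff_distrib sum_subtractf)
  then have "objective lam r p q = ereal ((\<Sum>i\<in>UNIV. q i * r i) - (\<Sum>i\<in>UNIV. p i * r i)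
      - lam * ((\<Sum>i\<in>UNIV. q i * r i) / lam - ln Z))"
    using H supp by (simp add: objective_def rel_entropy_def)
  also have "\<dots> = ereal (lam * ln Z - (\<Sum>i\<in>UNIV. p i * r i))"
    using lam by (simp add: algebra_simps)
  finally show ?thesis using qS by simp
qed

lemma alg1:
  fixes c D E0 :: real
  assumes "c \<noteq> 0" "D \<noteq> 0"
  shows "(D - c * E0) / (c * D) = (D / c - E0) / D"
  using assms by (simp add: field_simps)

lemma sum_two:
  fixes f :: "'n::finite \<Rightarrow> real"
  assumes "a \<noteq> b" "\<And>k. k \<noteq> a \<Longrightarrow> k \<noteq> b \<Longrightarrow> f k = 0"
  shows "(\<Sum>k\<in>UNIV. f k) = f a + f b"
proof -
  have "(\<Sum>k\<in>UNIV. f k) = (\<Sum>k\<in>{a,b}. f k)"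
    by (rule sum.mono_neutral_right) (use assms in auto)
  then show ?thesis using assms by simp
qed

lemma t_bounds:
  fixes m M lam :: real
  assumes "m < M" "lam > 0"
  shows "0 \<le> (exp (M / lam) - exp (m / lam) - (M - m) / lam * exp (m / lam))
             / ((M - m) / lam * (exp (M / lam) - exp (m / lam)))"
    and "(exp (M / lam) - exp (m / lam) - (M - m) / lam * exp (m / lam))
             / ((M - m) / lam * (exp (M / lam) - exp (m / lam))) \<le> 1"
proof -
  define x where "x = (M - m) / lam"
  have x: "x > 0" using assms by (simp add: x_def)
  have E1: "exp (M/lam) = exp (m/lam) * exp x"
    unfolding x_def using assms by (simp add: exp_add[symmetric] diff_divide_distrib)
  have den: "(M - m) / lam * (exp (M / lam) - exp (m / lam)) > 0"
    using assms by (simp add: divide_strict_right_mono)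
  have n1: "exp x - 1 - x \<ge> 0" using exp_ge_add_one_self[of x] by linarith
  have "exp (M / lam) - exp (m / lam) - (M - m) / lam * exp (m / lam) = exp (m/lam) * (exp x - 1 - x)"
    unfolding E1 x_def[symmetric] by (simp add: algebra_simps)
  also have "\<dots> \<ge> 0" using n1 by simp
  finally have num: "exp (M / lam) - exp (m / lam) - (M - m) / lam * exp (m / lam) \<ge> 0" .
  then show "0 \<le> (exp (M / lam) - exp (m / lam) - (M - m) / lam * exp (m / lam))
             / ((M - m) / lam * (exp (M / lam) - exp (m / lam)))" using den by (intro divide_nonneg_pos)
  have n2: "exp x - 1 \<le> x * exp x"
  proof -
    have "1 - x \<le> exp (-x)" using exp_ge_add_one_self[of "-x"] by simp
    then have "(1 - x) * exp x \<le> exp (-x) * exp x" by (simp add: mult_right_mono)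
    also have "\<dots> = 1" by (simp add: exp_minus)
    finally show ?thesis by (simp add: algebra_simps)
  qed
  have le: "exp (M / lam) - exp (m / lam) - (M - m) / lam * exp (m / lam)
        \<le> (M - m) / lam * (exp (M / lam) - exp (m / lam))"
  proof -
    have "exp (m/lam) * (exp x - 1) \<le> exp (m/lam) * (x * exp x)" using n2 by simp
    then show ?thesis unfolding E1 x_def[symmetric] by (simp add: algebra_simps)
  qed
  then show "(exp (M / lam) - exp (m / lam) - (M - m) / lam * exp (m / lam))
             / ((M - m) / lam * (exp (M / lam) - exp (m / lam))) \<le> 1"
    using divide_le_eq_1_pos[OF den] by blast
qed

theorem mainTheorem17:
  fixes r :: "'n::finite \<Rightarrow> real" and lam :: real and istar jstar :: 'n
    and pstar qstar :: "'n \<Rightarrow> real"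
  assumes n2: "CARD('n) \<ge> 2"
    and lam_pos: "lam > 0"
    and distinct: "inj r"
    and imax: "r istar = Max (range r)"
    and jmin: "r jstar = Min (range r)"
    and pstar_def: "pstar = (\<lambda>k.
           if k = istar then
             (exp (r istar / lam) - exp (r jstar / lam) - (r istar - r jstar) / lam * exp (r jstar / lam))
             / ((r istar - r jstar) / lam * (exp (r istar / lam) - exp (r jstar / lam)))
           else if k = jstar then
             1 - (exp (r istar / lam) - exp (r jstar / lam) - (r istar - r jstar) / lam * exp (r jstar / lam))
                 / ((r istar - r jstar) / lam * (exp (r istar / lam) - exp (r jstar / lam)))
           else 0)"
    and qstar_def: "qstar = (\<lambda>i. pstar i * exp (r i / lam) / (\<Sum>j\<in>UNIV. pstar j * exp (r j / lam)))"
  shows "(SUP pq\<in>prob_simplex \<times> prob_simplex. objective lam r (fst pq) (snd pq)) =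
           ereal (lam * ln ((exp (Max (range r) / lam) - exp (Min (range r) / lam)) / (Max (range r) - Min (range r)))
                  - (exp (Max (range r) / lam) * Min (range r) - exp (Min (range r) / lam) * Max (range r))
                    / (exp (Max (range r) / lam) - exp (Min (range r) / lam))
                  + lam * ln lam - lam)
       \<and> pstar \<in> prob_simplex \<and> qstar \<in> prob_simplex
       \<and> objective lam r pstar qstar = (SUP pq\<in>prob_simplex \<times> prob_simplex. objective lam r (fst pq) (snd pq))"
proof -
  define M where "M = Max (range r)"
  define m where "m = Min (range r)"
  have bnd: "\<And>i. m \<le> r i \<and> r i \<le> M" unfolding M_def m_def by auto
  obtain a b :: 'n where ab: "a \<noteq> b"
  proof (rule ccontr)
    assume "\<not> thesis"
    then have "\<forall>a b::'n. a = b" using that by blast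
    then have "(UNIV::'n set) = {undefined}" by auto
    then have "CARD('n) = 1" by (metis card.empty card_insert_disjoint empty_iff finite.emptyI One_nat_def)
    then show False using n2 by simp
  qed
  have "r a \<noteq> r b" using ab distinct by (meson injD)
  then have mM: "m < M" using bnd[of a] bnd[of b] by linarith
  have ij: "istar \<noteq> jstar" using imax jmin mM unfolding M_def[symmetric] m_def[symmetric] by auto
  define E1 where "E1 = exp (M/lam)"
  define E0 where "E0 = exp (m/lam)"
  define t where "t = (E1 - E0 - (M - m) / lam * E0) / ((M - m) / lam * (E1 - E0))"
  have t01: "0 \<le> t" "t \<le> 1" unfolding t_def E1_def E0_def using t_bounds[OF mM lam_pos] by auto
  have pst: "pstar = (\<lambda>k. if k = istar then t else if k = jstar then 1 - t else 0)"
    unfolding pstar_def t_def E1_def E0_def imax jmin M_def m_def ..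
  have D: "E1 - E0 > 0" using mM lam_pos by (simp add: E1_def E0_def divide_strict_right_mono)
  have nz: "E1 - E0 \<noteq> 0" "M - m \<noteq> 0" "lam \<noteq> 0" "E1 \<noteq> E0" "M \<noteq> m" using D mM lam_pos by auto
  define S where "S = lam * (E1 - E0) / (M - m)"
  have t': "t = (S - E0) / (E1 - E0)"
  proof -
    have "(M - m) / lam \<noteq> 0" using nz by simp
    then have "t = ((E1 - E0) / ((M - m) / lam) - E0) / (E1 - E0)"
      unfolding t_def using alg1 nz by blast
    then show ?thesis unfolding S_def by simp
  qed
  have psum: "(\<Sum>k\<in>UNIV. pstar k) = 1"
    by (subst sum_two[OF ij]) (auto simp: pst ij ij[symmetric])
  have pS: "pstar \<in> prob_simplex" unfolding prob_simplex_def using psum t01 by (auto simp: pst)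
  define Z where "Z = (\<Sum>j\<in>UNIV. pstar j * exp (r j / lam))"
  have Zv: "Z = t * E1 + (1 - t) * E0"
    unfolding Z_def by (subst sum_two[OF ij]) (auto simp: pst ij ij[symmetric] E1_def E0_def imax jmin M_def m_def)
  have Zv2: "Z = S"
  proof -
    have "Z = E0 + t * (E1 - E0)" unfolding Zv by (simp add: algebra_simps)
    moreover have "t * (E1 - E0) = S - E0" unfolding t' using nz by simp
    ultimately show ?thesis by simp
  qed
  have prv: "(\<Sum>i\<in>UNIV. pstar i * r i) = t * M + (1 - t) * m"
    by (subst sum_two[OF ij]) (auto simp: pst ij ij[symmetric] imax jmin M_def m_def)
  have att: "qstar \<in> prob_simplex \<and> objective lam r pstar qstar = ereal (lam * ln Z - (\<Sum>i\<in>UNIV. pstar i * r i))"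
    by (rule gibbs_attain[OF pS lam_pos Z_def]) (simp add: qstar_def Z_def)
  have val: "lam * ln Z - (\<Sum>i\<in>UNIV. pstar i * r i) = Vval lam m M"
  proof -
    have "ln Z = ln lam + ln ((E1 - E0) / (M - m))"
      unfolding Zv2 S_def using lam_pos D mM by (simp add: ln_div ln_mult)
    moreover have "t * M + (1 - t) * m = (E1 * m - E0 * M) / (E1 - E0) + lam"
    proof -
      have "S * (M - m) = lam * (E1 - E0)" unfolding S_def using nz by simp
      then have "t * (M - m) = lam - E0 * (M - m) / (E1 - E0)"
        unfolding t' using nz by (simp add: field_simps)
      moreover have "t * M + (1 - t) * m = m + t * (M - m)" by (simp add: algebra_simps)
      moreover have "m + (lam - E0 * (M - m) / (E1 - E0)) = (E1 * m - E0 * M) / (E1 - E0) + lam"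
        using nz by (simp add: field_simps)
      ultimately show ?thesis by simp
    qed
    ultimately show ?thesis unfolding prv Vval_def E1_def[symmetric] E0_def[symmetric]
      by (simp add: algebra_simps)
  qed
  have SUPeq: "(SUP pq\<in>prob_simplex \<times> prob_simplex. objective lam r (fst pq) (snd pq)) = ereal (Vval lam m M)"
  proof (rule antisym)
    show "(SUP pq\<in>prob_simplex \<times> prob_simplex. objective lam r (fst pq) (snd pq)) \<le> ereal (Vval lam m M)"
      by (rule SUP_least) (auto intro: upper_bound[OF _ _ lam_pos mM bnd])
    have "(pstar, qstar) \<in> prob_simplex \<times> prob_simplex" using pS att by simp
    then show "ereal (Vval lam m M) \<le> (SUP pq\<in>prob_simplex \<times> prob_simplex. objective lam r (fst pq) (snd pq))"
      using att val by (intro SUP_upper2[of "(pstar, qstar)"]) auto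
  qed
  show ?thesis
    unfolding M_def[symmetric] m_def[symmetric] SUPeq
    using pS att val by (simp add: Vval_def)
qed

end
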